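(* Let $G\in\mathcal{C}$ be different from the $4$-cycle, and let $C_1$ and $C_2$ be its two $4$-faces. Then $G$ is $(C_1\cup C_2)$-critical; moreover, a precoloring of $C_1\cup C_2$ in which, for each $i\in\{1,2\}$, the two vertices of $C_i$ of degree two in $G$ receive different colors does not extend to a proper $3$-coloring of $G$.
   Context: $\mathcal{C}$ is the class of plane graphs obtained from a cycle of length $4$ by finitely many repetitions of the following operation: given a graph whose outer face is $v_1v_2v_3v_4$ with $v_1$ and $v_3$ of degree two, add new vertices $v_2',v_3',v_4'$ and edges $v_1v_2', v_2'v_3', v_3'v_4', v_4'v_1, v_3v_3'$, and let $v_1v_2'v_3'v_4'$ be the new outer face. Each graph of $\mathcal{C}$ has two $4$-faces. All colorings are proper $3$-colorings. For a graph $G$ and subgraph $S\subseteq G$, $G$ is $S$-critical if for every proper subgraph $G''\subsetneq G$ with $S\subseteq G''$ there exists a coloring of $S$ that extends to a coloring of $G''$ but not to a coloring of $G$. *)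

theory Defs
  imports Main
begin

text \<open>Graphs are given by a vertex set V and a set E of edges, each edge a
two-element set of vertices. A labelled 4-cycle is a 4-tuple (a,b,c,d).\<close>

definition cyc_verts :: "'a \<times> 'a \<times> 'a \<times> 'a \<Rightarrow> 'a set" where
  "cyc_verts q = (case q of (a,b,c,d) \<Rightarrow> {a,b,c,d})"

definition cyc_edges :: "'a \<times> 'a \<times> 'a \<times> 'a \<Rightarrow> 'a set set" where
  "cyc_edges q = (case q of (a,b,c,d) \<Rightarrow> {{a,b},{b,c},{c,d},{d,a}})"

definition deg :: "'a set set \<Rightarrow> 'a \<Rightarrow> nat" where
  "deg E v = card {e \<in> E. v \<in> e}"

text \<open>The class C, tracking the inner 4-face (first tuple, never changes) and the
labelled outer 4-face (second tuple). The rotation and reversal rules allow any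
labelling of the outer face boundary, as in "a graph whose outer face is v1v2v3v4".\<close>

inductive classC :: "'a set \<Rightarrow> 'a set set \<Rightarrow> 'a \<times> 'a \<times> 'a \<times> 'a
                      \<Rightarrow> 'a \<times> 'a \<times> 'a \<times> 'a \<Rightarrow> bool" where
  base: "distinct [a,b,c,d] \<Longrightarrow>
         classC {a,b,c,d} {{a,b},{b,c},{c,d},{d,a}} (a,b,c,d) (a,b,c,d)"
| rot: "classC V E C (v1,v2,v3,v4) \<Longrightarrow> classC V E C (v2,v3,v4,v1)"
| rev: "classC V E C (v1,v2,v3,v4) \<Longrightarrow> classC V E C (v4,v3,v2,v1)"
| step: "classC V E C (v1,v2,v3,v4) \<Longrightarrow> deg E v1 = 2 \<Longrightarrow> deg E v3 = 2 \<Longrightarrow>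
         distinct [x,y,z] \<Longrightarrow> x \<notin> V \<Longrightarrow> y \<notin> V \<Longrightarrow> z \<notin> V \<Longrightarrow>
         classC (V \<union> {x,y,z}) (E \<union> {{v1,x},{x,y},{y,z},{z,v1},{v3,y}}) C (v1,x,y,z)"

definition is_subgraph :: "'a set \<Rightarrow> 'a set set \<Rightarrow> 'a set \<Rightarrow> 'a set set \<Rightarrow> bool" where
  "is_subgraph V' E' V E \<longleftrightarrow> V' \<subseteq> V \<and> E' \<subseteq> E \<and> (\<forall>e\<in>E'. e \<subseteq> V')"

definition proper3 :: "'a set \<Rightarrow> 'a set set \<Rightarrow> ('a \<Rightarrow> nat) \<Rightarrow> bool" where
  "proper3 V E f \<longleftrightarrow> (\<forall>v\<in>V. f v < 3) \<and>
     (\<forall>u v. {u,v} \<in> E \<longrightarrow> u \<noteq> v \<longrightarrow> f u \<noteq> f v)"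

definition extends_to :: "'a set \<Rightarrow> ('a \<Rightarrow> nat) \<Rightarrow> 'a set \<Rightarrow> 'a set set \<Rightarrow> bool" where
  "extends_to VS f V E \<longleftrightarrow> (\<exists>g. proper3 V E g \<and> (\<forall>v\<in>VS. g v = f v))"

definition critical :: "'a set \<Rightarrow> 'a set set \<Rightarrow> 'a set \<Rightarrow> 'a set set \<Rightarrow> bool" where
  "critical V E VS ES \<longleftrightarrow> is_subgraph VS ES V E \<and>
     (\<forall>V'' E''. is_subgraph V'' E'' V E \<and> VS \<subseteq> V'' \<and> ES \<subseteq> E'' \<and> (V'', E'') \<noteq> (V, E) \<longrightarrow>
        (\<exists>f. proper3 VS ES f \<and> extends_to VS f V'' E'' \<and> \<not> extends_to VS f V E))"

end

theory Submission imports Defs begin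

definition diag :: "'a \<times> 'a \<times> 'a \<times> 'a \<Rightarrow> 'a set set" where
  "diag q = (case q of (a,b,c,d) \<Rightarrow> {{a,c},{b,d}})"
definition dist4 :: "'a \<times> 'a \<times> 'a \<times> 'a \<Rightarrow> bool" where
  "dist4 q = (case q of (a,b,c,d) \<Rightarrow> distinct [a,b,c,d])"
definition monoc :: "('a \<Rightarrow> nat) \<Rightarrow> 'a set \<Rightarrow> bool" where
  "monoc g D = (\<forall>u\<in>D. \<forall>v\<in>D. g u = g v)"
definition pex :: "'a set set \<Rightarrow> 'a set \<Rightarrow> ('a \<Rightarrow> nat) \<Rightarrow> bool" where
  "pex E e g = (\<forall>u v. {u,v} \<in> E \<longrightarrow> {u,v} \<noteq> e \<longrightarrow> u \<noteq> v \<longrightarrow> g u \<noteq> g v)"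
definition col :: "'a set \<Rightarrow> ('a \<Rightarrow> nat) \<Rightarrow> bool" where
  "col V g = (\<forall>v\<in>V. g v < 3)"

lemma proper3_pex: "proper3 V E g \<longleftrightarrow> col V g \<and> pex E {} g"
  unfolding proper3_def col_def pex_def by auto

lemma pex_weak: "pex E {} g \<Longrightarrow> pex E e g"
  unfolding pex_def by auto

lemma cv_rot: "cyc_verts (b,c,d,a) = cyc_verts (a,b,c,d)"
  and cv_rev: "cyc_verts (d,c,b,a) = cyc_verts (a,b,c,d)"
  and ce_rot: "cyc_edges (b,c,d,a) = cyc_edges (a,b,c,d)"
  and ce_rev: "cyc_edges (d,c,b,a) = cyc_edges (a,b,c,d)"
  and dg_rot: "diag (b,c,d,a) = diag (a,b,c,d)"
  and dg_rev: "diag (d,c,b,a) = diag (a,b,c,d)"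
  and d4_rot: "dist4 (b,c,d,a) = dist4 (a,b,c,d)"
  and d4_rev: "dist4 (d,c,b,a) = dist4 (a,b,c,d)"
  by (auto simp: cyc_verts_def cyc_edges_def diag_def dist4_def insert_commute)

lemma deg_Un: "finite E \<Longrightarrow> finite N \<Longrightarrow> E \<inter> N = {} \<Longrightarrow> deg (E \<union> N) w = deg E w + deg N w"
proof -
  assume a: "finite E" "finite N" "E \<inter> N = {}"
  have "{e \<in> E \<union> N. w \<in> e} = {e \<in> E. w \<in> e} \<union> {e \<in> N. w \<in> e}" by auto
  then show ?thesis unfolding deg_def using a by (simp add: card_Un_disjoint disjoint_iff)
qed

lemma degN:
  assumes "distinct [x,y,z]" "v1 \<noteq> v3" "v1 \<notin> {x,y,z}" "v3 \<notin> {x,y,z}"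
  and N: "N = {{v1,x},{x,y},{y,z},{z,v1},{v3,y}}"
  shows "deg N v1 = 2" "deg N v3 = 1" "deg N x = 2" "deg N y = 3" "deg N z = 2"
    "w \<notin> {v1,v3,x,y,z} \<Longrightarrow> deg N w = 0"
proof -
  have "{e\<in>N. v1 \<in> e} = {{v1,x},{z,v1}}" using assms by auto
  then show "deg N v1 = 2" unfolding deg_def using assms by (auto simp: card_insert_if doubleton_eq_iff)
  have "{e\<in>N. v3 \<in> e} = {{v3,y}}" using assms by auto
  then show "deg N v3 = 1" unfolding deg_def by simp
  have "{e\<in>N. x \<in> e} = {{v1,x},{x,y}}" using assms by auto
  then show "deg N x = 2" unfolding deg_def using assms by (auto simp: card_insert_if doubleton_eq_iff)
  have "{e\<in>N. y \<in> e} = {{x,y},{y,z},{v3,y}}" using assms by auto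
  then show "deg N y = 3" unfolding deg_def using assms by (auto simp: card_insert_if doubleton_eq_iff)
  have "{e\<in>N. z \<in> e} = {{y,z},{z,v1}}" using assms by auto
  then show "deg N z = 2" unfolding deg_def using assms by (auto simp: card_insert_if doubleton_eq_iff)
  show "w \<notin> {v1,v3,x,y,z} \<Longrightarrow> deg N w = 0"
  proof -
    assume "w \<notin> {v1,v3,x,y,z}"
    then have "{e\<in>N. w \<in> e} = {}" using N by auto
    then show ?thesis unfolding deg_def by (metis card.empty)
  qed
qed

lemma deg_out: "\<forall>e\<in>E. e \<subseteq> V \<Longrightarrow> x \<notin> V \<Longrightarrow> deg E x = 0"
proof -
  assume "\<forall>e\<in>E. e \<subseteq> V" "x \<notin> V"
  then have "{e \<in> E. x \<in> e} = {}" by auto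
  then show ?thesis unfolding deg_def by (metis card.empty)
qed

lemma deg_cyc: "distinct [a,b,c,d] \<Longrightarrow> w \<in> {a,b,c,d} \<Longrightarrow> deg (cyc_edges (a,b,c,d)) w = 2"
proof -
  assume d: "distinct [a,b,c,d]" and w: "w \<in> {a,b,c,d}"
  have c2: "p \<noteq> q \<Longrightarrow> card {p, q} = 2" for p q :: "'a set" by simp
  from w consider "w = a" | "w = b" | "w = c" | "w = d" by blast
  then show ?thesis
  proof cases
    case 1
    then have "{e \<in> cyc_edges (a,b,c,d). w \<in> e} = {{a,b},{d,a}}" using d unfolding cyc_edges_def by auto
    moreover have "{a,b} \<noteq> {d,a}" using d by (auto simp: doubleton_eq_iff)
    ultimately show ?thesis unfolding deg_def using c2 by simp
  next
    case 2
    then have "{e \<in> cyc_edges (a,b,c,d). w \<in> e} = {{a,b},{b,c}}" using d unfolding cyc_edges_def by auto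
    moreover have "{a,b} \<noteq> {b,c}" using d by (auto simp: doubleton_eq_iff)
    ultimately show ?thesis unfolding deg_def using c2 by simp
  next
    case 3
    then have "{e \<in> cyc_edges (a,b,c,d). w \<in> e} = {{b,c},{c,d}}" using d unfolding cyc_edges_def by auto
    moreover have "{b,c} \<noteq> {c,d}" using d by (auto simp: doubleton_eq_iff)
    ultimately show ?thesis unfolding deg_def using c2 by simp
  next
    case 4
    then have "{e \<in> cyc_edges (a,b,c,d). w \<in> e} = {{c,d},{d,a}}" using d unfolding cyc_edges_def by auto
    moreover have "{c,d} \<noteq> {d,a}" using d by (auto simp: doubleton_eq_iff)
    ultimately show ?thesis unfolding deg_def using c2 by simp
  qed
qed

lemma ext:
  assumes "\<forall>e\<in>E. e \<subseteq> V" "v1\<in>V" "v3\<in>V" "x\<notin>V" "y\<notin>V" "z\<notin>V" "distinct [x,y,z]"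
    "col V g" "pex E e g" "cx<3" "cy<3" "cz<3"
    "{v1,x} \<noteq> e \<Longrightarrow> g v1 \<noteq> cx" "{x,y}\<noteq>e \<Longrightarrow> cx\<noteq>cy" "{y,z}\<noteq>e \<Longrightarrow> cy\<noteq>cz"
    "{z,v1}\<noteq>e \<Longrightarrow> cz \<noteq> g v1" "{v3,y}\<noteq>e \<Longrightarrow> g v3 \<noteq> cy"
  shows "col (V\<union>{x,y,z}) (g(x:=cx,y:=cy,z:=cz)) \<and>
     pex (E \<union> {{v1,x},{x,y},{y,z},{z,v1},{v3,y}}) e (g(x:=cx,y:=cy,z:=cz))"
proof
  show "col (V\<union>{x,y,z}) (g(x:=cx,y:=cy,z:=cz))" using assms unfolding col_def by auto
  have ne: "v1 \<noteq> x" "v1 \<noteq> y" "v1 \<noteq> z" "v3 \<noteq> x" "v3 \<noteq> y" "v3 \<noteq> z" using assms by auto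
  show "pex (E \<union> {{v1,x},{x,y},{y,z},{z,v1},{v3,y}}) e (g(x:=cx,y:=cy,z:=cz))"
    unfolding pex_def
  proof (intro allI impI)
    fix u v assume uv: "{u,v} \<in> E \<union> {{v1,x},{x,y},{y,z},{z,v1},{v3,y}}" "{u,v} \<noteq> e" "u \<noteq> v"
    show "(g(x:=cx,y:=cy,z:=cz)) u \<noteq> (g(x:=cx,y:=cy,z:=cz)) v"
    proof (cases "{u,v} \<in> E")
      case True
      then have "u \<in> V" "v \<in> V" using assms(1) by auto
      then have "u \<notin> {x,y,z}" "v \<notin> {x,y,z}" using assms by auto
      then show ?thesis using True uv assms(9) unfolding pex_def by auto
    next
      case False
      then have "{u,v} \<in> {{v1,x},{x,y},{y,z},{z,v1},{v3,y}}" using uv by auto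
      then have "(u=v1\<and>v=x \<or> u=x\<and>v=v1) \<or> (u=x\<and>v=y \<or> u=y\<and>v=x) \<or> (u=y\<and>v=z \<or> u=z\<and>v=y)
        \<or> (u=z\<and>v=v1 \<or> u=v1\<and>v=z) \<or> (u=v3\<and>v=y \<or> u=y\<and>v=v3)"
        by (auto simp: doubleton_eq_iff)
      then show ?thesis using uv ne assms(7,13-17)
        by (elim disjE conjE; simp add: insert_commute)
    qed
  qed
qed

lemma monoc_upd: "D \<subseteq> V \<Longrightarrow> x\<notin>V \<Longrightarrow> y\<notin>V \<Longrightarrow> z\<notin>V \<Longrightarrow>
   monoc (g(x:=a,y:=b,z:=c)) D = monoc g D"
  unfolding monoc_def by (metis fun_upd_other subsetD)

lemma ext2:
  assumes "\<forall>e\<in>E. e \<subseteq> V" "v1\<in>V" "v3\<in>V" "x\<notin>V" "y\<notin>V" "z\<notin>V" "distinct [x,y,z]"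
    "col V g" "pex E e g" "cx<3" "cy<3" "cz<3"
    "{v1,x} \<noteq> e \<Longrightarrow> g v1 \<noteq> cx" "{x,y}\<noteq>e \<Longrightarrow> cx\<noteq>cy" "{y,z}\<noteq>e \<Longrightarrow> cy\<noteq>cz"
    "{z,v1}\<noteq>e \<Longrightarrow> cz \<noteq> g v1" "{v3,y}\<noteq>e \<Longrightarrow> g v3 \<noteq> cy"
    "D1 \<subseteq> V" "\<not> monoc g D1" "cx \<noteq> cz"
  shows "\<exists>g'. col (V\<union>{x,y,z}) g' \<and> pex (E \<union> {{v1,x},{x,y},{y,z},{z,v1},{v3,y}}) e g'
     \<and> \<not> monoc g' D1 \<and> \<not> monoc g' {x,z}"
proof (intro exI conjI)
  show "col (V\<union>{x,y,z}) (g(x:=cx,y:=cy,z:=cz))"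
    "pex (E \<union> {{v1,x},{x,y},{y,z},{z,v1},{v3,y}}) e (g(x:=cx,y:=cy,z:=cz))"
    using ext[OF assms(1-17)] by auto
  show "\<not> monoc (g(x:=cx,y:=cy,z:=cz)) D1" using monoc_upd[OF assms(18,4,5,6)] assms(19) by simp
  show "\<not> monoc (g(x:=cx,y:=cy,z:=cz)) {x,z}" using assms(7,20) unfolding monoc_def by auto
qed

lemma three: "(a::nat) < 3 \<Longrightarrow> \<exists>b c. b < 3 \<and> c < 3 \<and> a \<noteq> b \<and> a \<noteq> c \<and> b \<noteq> c"
  by (rule exI[of _ "(a+1) mod 3"], rule exI[of _ "(a+2) mod 3"]) presburger

lemma core:
  assumes sub: "\<forall>e\<in>E. e \<subseteq> V" and v: "v1\<in>V" "v3\<in>V" "v1\<noteq>v3"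
  and fr: "x\<notin>V" "y\<notin>V" "z\<notin>V" "distinct [x,y,z]" and D: "D1 \<subseteq> V"
  and A: "\<forall>g. proper3 V E g \<longrightarrow> monoc g D1 \<or> g v1 = g v3"
  and B: "\<exists>g. proper3 V E g \<and> \<not>monoc g D1"
  and Cc: "\<forall>e\<in>E - ES. \<exists>g. col V g \<and> pex E e g \<and> \<not>monoc g D1 \<and> g v1 \<noteq> g v3"
  and N: "N = {{v1,x},{x,y},{y,z},{z,v1},{v3,y}}"
  shows "(\<forall>g. proper3 (V\<union>{x,y,z}) (E\<union>N) g \<longrightarrow> monoc g D1 \<or> monoc g {x,z}) \<and>
         (\<exists>g. proper3 (V\<union>{x,y,z}) (E\<union>N) g \<and> \<not>monoc g D1) \<and>
         (\<forall>e\<in>(E\<union>N) - ES. \<exists>g. col (V\<union>{x,y,z}) g \<and> pex (E\<union>N) e g \<and> \<not>monoc g D1 \<and> \<not>monoc g {x,z})"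
proof (intro conjI allI impI ballI)
  fix g assume p: "proper3 (V\<union>{x,y,z}) (E\<union>N) g"
  then have "proper3 V E g" unfolding proper3_def by auto
  with A have h: "monoc g D1 \<or> g v1 = g v3" by blast
  have pe: "\<And>u v. {u,v} \<in> E\<union>N \<Longrightarrow> u\<noteq>v \<Longrightarrow> g u \<noteq> g v" using p unfolding proper3_def by blast
  have ne: "v1 \<noteq> x" "v1 \<noteq> y" "v1 \<noteq> z" "v3 \<noteq> x" "v3 \<noteq> y" "v3 \<noteq> z" "x\<noteq>y" "y\<noteq>z" "x\<noteq>z"
    using v fr by auto
  have "g v1 \<noteq> g x" by (rule pe) (auto simp: N ne)
  moreover have "g x \<noteq> g y" by (rule pe) (auto simp: N ne)
  moreover have "g y \<noteq> g z" by (rule pe) (auto simp: N ne)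
  moreover have "g z \<noteq> g v1" by (rule pe) (use ne in \<open>auto simp: N\<close>)
  moreover have "g v3 \<noteq> g y" by (rule pe) (auto simp: N ne)
  moreover have "g v1 < 3" "g x < 3" "g y < 3" "g z < 3" using p v unfolding proper3_def by auto
  ultimately have "g v1 = g v3 \<Longrightarrow> g x = g z" by arith
  then show "monoc g D1 \<or> monoc g {x,z}" using h unfolding monoc_def by auto
next
  obtain g where g: "proper3 V E g" "\<not>monoc g D1" using B by blast
  then have eq: "g v1 = g v3" using A by blast
  have "g v1 < 3" using g v unfolding proper3_def by auto
  then obtain b c where bc: "b < 3" "c < 3" "g v1 \<noteq> b" "g v1 \<noteq> c" "b \<noteq> c" using three by blast
  have "col (V\<union>{x,y,z}) (g(x:=b,y:=c,z:=b)) \<and> pex (E \<union> N) {} (g(x:=b,y:=c,z:=b))"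
    unfolding N
    by (rule ext[OF sub v(1,2) fr]) (use g bc eq in \<open>auto simp: proper3_pex\<close>)
  moreover have "\<not> monoc (g(x:=b,y:=c,z:=b)) D1" using monoc_upd[OF D fr(1-3)] g by simp
  ultimately show "\<exists>g. proper3 (V\<union>{x,y,z}) (E\<union>N) g \<and> \<not>monoc g D1"
    by (auto simp: proper3_pex)
next
  fix e assume e: "e \<in> (E\<union>N) - ES"
  show "\<exists>g. col (V\<union>{x,y,z}) g \<and> pex (E\<union>N) e g \<and> \<not>monoc g D1 \<and> \<not>monoc g {x,z}"
  proof (cases "e \<in> E")
    case True
    then obtain g where g: "col V g" "pex E e g" "\<not>monoc g D1" "g v1 \<noteq> g v3" using Cc e by blast
    have "g v1 < 3" using g v unfolding col_def by auto
    then obtain b c where bc: "b < 3" "c < 3" "g v1 \<noteq> b" "g v1 \<noteq> c" "b \<noteq> c" using three by blast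
    show ?thesis unfolding N
      by (rule ext2[OF sub v(1,2) fr g(1,2), where cx=b and cy="g v1" and cz=c])
        (use g bc v D in \<open>auto simp: col_def\<close>)
  next
    case False
    then have eN: "e \<in> N" using e by blast
    obtain g where g: "proper3 V E g" "\<not>monoc g D1" using B by blast
    then have eq: "g v1 = g v3" using A by blast
    have gc: "col V g" "pex E e g" using g by (auto simp: proper3_pex intro: pex_weak)
    have "g v1 < 3" using g v unfolding proper3_def by auto
    then obtain b c where bc: "b < 3" "c < 3" "g v1 \<noteq> b" "g v1 \<noteq> c" "b \<noteq> c" using three by blast
    from eN consider "e = {v1,x}" | "e = {x,y}" | "e = {y,z}" | "e = {z,v1}" | "e = {v3,y}"
      unfolding N by blast
    then show ?thesis
    proof cases
      case 1 show ?thesis unfolding N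
        by (rule ext2[OF sub v(1,2) fr gc, where cx="g v1" and cy=b and cz=c])
          (use g bc v D eq 1 in \<open>auto simp: col_def proper3_def\<close>)
    next
      case 2 show ?thesis unfolding N
        by (rule ext2[OF sub v(1,2) fr gc, where cx=b and cy=b and cz=c])
          (use g bc v D eq 2 in \<open>auto simp: col_def proper3_def\<close>)
    next
      case 3 show ?thesis unfolding N
        by (rule ext2[OF sub v(1,2) fr gc, where cx=c and cy=b and cz=b])
          (use g bc v D eq 3 in \<open>auto simp: col_def proper3_def\<close>)
    next
      case 4 show ?thesis unfolding N
        by (rule ext2[OF sub v(1,2) fr gc, where cx=c and cy=b and cz="g v1"])
          (use g bc v D eq 4 in \<open>auto simp: col_def proper3_def\<close>)
    next
      case 5 show ?thesis unfolding N
        by (rule ext2[OF sub v(1,2) fr gc, where cx=b and cy="g v1" and cz=c])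
          (use g bc v D eq 5 in \<open>auto simp: col_def proper3_def\<close>)
    qed
  qed
qed

definition Inv0 :: "'a set \<Rightarrow> 'a set set \<Rightarrow> 'a \<times> 'a \<times> 'a \<times> 'a \<Rightarrow> 'a \<times> 'a \<times> 'a \<times> 'a \<Rightarrow> bool" where
  "Inv0 V E C Q = (card V = 4 \<and> V = cyc_verts C \<and> E = cyc_edges C \<and> dist4 C \<and> dist4 Q \<and>
     cyc_verts Q = cyc_verts C \<and> cyc_edges Q = cyc_edges C \<and> diag Q = diag C)"

definition Inv1 :: "'a set \<Rightarrow> 'a set set \<Rightarrow> 'a \<times> 'a \<times> 'a \<times> 'a \<Rightarrow> 'a \<times> 'a \<times> 'a \<times> 'a \<Rightarrow> bool" where
  "Inv1 V E C Q = (finite V \<and> finite E \<and> (\<forall>e\<in>E. e \<subseteq> V) \<and> (\<forall>v\<in>V. \<exists>e\<in>E. v \<in> e) \<and>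
     dist4 C \<and> dist4 Q \<and> cyc_verts C \<subseteq> V \<and> cyc_verts Q \<subseteq> V \<and> cyc_edges C \<subseteq> E \<and> cyc_edges Q \<subseteq> E \<and>
     (\<exists>D1 D2. D1 \<in> diag C \<and> D2 \<in> diag Q \<and> D2 \<inter> cyc_verts C = {} \<and>
        (\<forall>u\<in>cyc_verts C. deg E u = 2 \<longleftrightarrow> u \<in> D1) \<and>
        (\<forall>u\<in>cyc_verts Q. deg E u = 2 \<longleftrightarrow> u \<in> D2) \<and>
        (\<forall>g. proper3 V E g \<longrightarrow> monoc g D1 \<or> monoc g D2) \<and>
        (\<exists>g. proper3 V E g \<and> \<not> monoc g D1) \<and>
        (\<forall>e\<in>E - cyc_edges C. \<exists>g. col V g \<and> pex E e g \<and> \<not> monoc g D1 \<and> \<not> monoc g D2)))"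

lemma Inv0_rot: "Inv0 V E C (v1,v2,v3,v4) \<Longrightarrow> Inv0 V E C (v2,v3,v4,v1)"
  and Inv0_rev: "Inv0 V E C (v1,v2,v3,v4) \<Longrightarrow> Inv0 V E C (v4,v3,v2,v1)"
  and Inv1_rot: "Inv1 V E C (v1,v2,v3,v4) \<Longrightarrow> Inv1 V E C (v2,v3,v4,v1)"
  and Inv1_rev: "Inv1 V E C (v1,v2,v3,v4) \<Longrightarrow> Inv1 V E C (v4,v3,v2,v1)"
  unfolding Inv0_def Inv1_def cv_rot[of v2 v3 v4 v1] cv_rev[of v1 v2 v3 v4]
    ce_rot[of v2 v3 v4 v1] ce_rev[of v1 v2 v3 v4] dg_rot[of v2 v3 v4 v1] dg_rev[of v1 v2 v3 v4]
    d4_rot[of v2 v3 v4 v1] d4_rev[of v1 v2 v3 v4]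
  by (auto simp only:)

lemma diag_sub: "D \<in> diag q \<Longrightarrow> D \<subseteq> cyc_verts q"
  by (cases q) (auto simp: diag_def cyc_verts_def)

lemma ce_sub: "e \<in> cyc_edges q \<Longrightarrow> e \<subseteq> cyc_verts q"
  by (cases q) (auto simp: cyc_edges_def cyc_verts_def)

lemma diag_pair: "D \<in> diag q \<Longrightarrow> dist4 q \<Longrightarrow> \<exists>p r. D = {p,r} \<and> p \<noteq> r"
  by (cases q) (auto simp: diag_def dist4_def)

lemma disjN: "\<forall>e\<in>E. e \<subseteq> V \<Longrightarrow> x\<notin>V \<Longrightarrow> y\<notin>V \<Longrightarrow> z\<notin>V \<Longrightarrow>
   E \<inter> {{v1,x},{x,y},{y,z},{z,v1},{v3,y}} = {}"
  by auto

lemma ex2I: "P a b \<Longrightarrow> \<exists>x y. P x y" by blast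

lemma step0:
  assumes I: "Inv0 V E C (v1,v2,v3,v4)" and fr: "distinct [x,y,z]" "x\<notin>V" "y\<notin>V" "z\<notin>V"
  shows "Inv1 (V\<union>{x,y,z}) (E \<union> {{v1,x},{x,y},{y,z},{z,v1},{v3,y}}) C (v1,x,y,z)"
proof -
  define N where "N = {{v1,x},{x,y},{y,z},{z,v1},{v3,y}}"
  have dq: "distinct [v1,v2,v3,v4]" and VV: "V = {v1,v2,v3,v4}" and EE: "E = cyc_edges (v1,v2,v3,v4)"
    and cvC: "cyc_verts C = {v1,v2,v3,v4}" and ceC: "cyc_edges C = E" and dC: "diag C = {{v1,v3},{v2,v4}}"
    and dC4: "dist4 C"
    using I unfolding Inv0_def by (auto simp: dist4_def cyc_verts_def diag_def)
  have E4: "E = {{v1,v2},{v2,v3},{v3,v4},{v4,v1}}" using EE by (simp add: cyc_edges_def)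
  have sub: "\<forall>e\<in>E. e \<subseteq> V" using VV E4 by auto
  have v: "v1 \<in> V" "v3 \<in> V" "v1 \<noteq> v3" using VV dq by auto
  have xyz: "v1 \<notin> {x,y,z}" "v3 \<notin> {x,y,z}" "v2 \<notin> {x,y,z}" "v4 \<notin> {x,y,z}" using VV fr by auto
  have finE: "finite E" "finite N" using E4 N_def by auto
  have dU: "\<And>w. deg (E \<union> N) w = deg E w + deg N w"
    by (rule deg_Un[OF finE]) (use disjN[OF sub fr(2-4)] N_def in simp)
  note dN = degN[OF fr(1) v(3) xyz(1,2) N_def]
  have dE: "\<And>w. w \<in> V \<Longrightarrow> deg E w = 2" using deg_cyc[OF dq] EE VV by simp
  have dEo: "deg E x = 0" "deg E y = 0" "deg E z = 0" using deg_out[OF sub] fr by auto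
  have A: "\<forall>g. proper3 V E g \<longrightarrow> monoc g {v2,v4} \<or> g v1 = g v3"
  proof (intro allI impI)
    fix g assume p: "proper3 V E g"
    have pe: "\<And>u v. {u,v} \<in> E \<Longrightarrow> u\<noteq>v \<Longrightarrow> g u \<noteq> g v" using p unfolding proper3_def by blast
    have "g v1 \<noteq> g v2" by (rule pe) (use dq in \<open>auto simp: E4\<close>)
    moreover have "g v2 \<noteq> g v3" by (rule pe) (use dq in \<open>auto simp: E4\<close>)
    moreover have "g v3 \<noteq> g v4" by (rule pe) (use dq in \<open>auto simp: E4\<close>)
    moreover have "g v4 \<noteq> g v1" by (rule pe) (use dq in \<open>auto simp: E4\<close>)
    moreover have "g v1 < 3" "g v2 < 3" "g v3 < 3" "g v4 < 3" using p VV unfolding proper3_def by auto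
    ultimately have "g v2 \<noteq> g v4 \<Longrightarrow> g v1 = g v3" by arith
    then show "monoc g {v2,v4} \<or> g v1 = g v3" by (cases "g v2 = g v4") (auto simp: monoc_def)
  qed
  have B: "\<exists>g. proper3 V E g \<and> \<not> monoc g {v2,v4}"
  proof (intro exI conjI)
    let ?g = "\<lambda>w. if w = v2 then 1 else if w = v4 then 2 else (0::nat)"
    show "\<not> monoc ?g {v2,v4}" using dq unfolding monoc_def by auto
    show "proper3 V E ?g" unfolding proper3_def E4 using dq
      by (auto simp: doubleton_eq_iff)
  qed
  have Cc: "\<forall>e\<in>E - cyc_edges C. \<exists>g. col V g \<and> pex E e g \<and> \<not>monoc g {v2,v4} \<and> g v1 \<noteq> g v3"
    using ceC by simp
  have D: "{v2,v4} \<subseteq> V" using VV by auto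
  note co = core[OF sub v fr(2,3,4,1) D A B Cc N_def]
  show ?thesis unfolding Inv1_def N_def[symmetric]
  proof (intro conjI ex2I[of _ "{v2,v4}" "{x,z}"])
    show "finite (V \<union> {x, y, z})" using VV by simp
    show "finite (E \<union> N)" using finE by simp
    show "\<forall>e\<in>E \<union> N. e \<subseteq> V \<union> {x, y, z}" using sub v N_def by auto
    show "\<forall>v\<in>V \<union> {x, y, z}. \<exists>e\<in>E \<union> N. v \<in> e" using VV E4 N_def by auto
    show "dist4 C" by fact
    show "dist4 (v1, x, y, z)" using fr xyz by (auto simp: dist4_def)
    show "cyc_verts C \<subseteq> V \<union> {x, y, z}" using cvC VV by auto
    show "cyc_verts (v1, x, y, z) \<subseteq> V \<union> {x, y, z}" using v by (auto simp: cyc_verts_def)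
    show "cyc_edges C \<subseteq> E \<union> N" using ceC by auto
    show "cyc_edges (v1, x, y, z) \<subseteq> E \<union> N" by (auto simp: cyc_edges_def N_def)
    show "{v2, v4} \<in> diag C" using dC by simp
    show "{x, z} \<in> diag (v1, x, y, z)" by (simp add: diag_def)
    show "{x, z} \<inter> cyc_verts C = {}" using cvC xyz by auto
    show "\<forall>u\<in>cyc_verts C. (deg (E \<union> N) u = 2) = (u \<in> {v2, v4})"
      using dU dE dN(1,2) dN(6)[of v2] dN(6)[of v4] xyz dq VV cvC by auto
    show "\<forall>u\<in>cyc_verts (v1, x, y, z). (deg (E \<union> N) u = 2) = (u \<in> {x, z})"
      using dU dE dN(1,3,4,5) dEo v fr xyz by (auto simp: cyc_verts_def)
  qed (use co ceC in auto)
qed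

lemma step1:
  assumes I: "Inv1 V E C (v1,v2,v3,v4)" and dg: "deg E v1 = 2" "deg E v3 = 2"
    and fr: "distinct [x,y,z]" "x\<notin>V" "y\<notin>V" "z\<notin>V"
  shows "Inv1 (V\<union>{x,y,z}) (E \<union> {{v1,x},{x,y},{y,z},{z,v1},{v3,y}}) C (v1,x,y,z)"
proof -
  define N where "N = {{v1,x},{x,y},{y,z},{z,v1},{v3,y}}"
  from I obtain D1 D2 where
    fin: "finite V" "finite E" and sub: "\<forall>e\<in>E. e \<subseteq> V" and cov: "\<forall>v\<in>V. \<exists>e\<in>E. v \<in> e"
    and dC4: "dist4 C" and dq: "distinct [v1,v2,v3,v4]" and cvC: "cyc_verts C \<subseteq> V"
    and cvQ: "{v1,v2,v3,v4} \<subseteq> V" and ceC: "cyc_edges C \<subseteq> E"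
    and D1: "D1 \<in> diag C" and D2: "D2 \<in> {{v1,v3},{v2,v4}}" and D2C: "D2 \<inter> cyc_verts C = {}"
    and dgC: "\<forall>u\<in>cyc_verts C. deg E u = 2 \<longleftrightarrow> u \<in> D1"
    and dgQ: "\<forall>u\<in>{v1,v2,v3,v4}. deg E u = 2 \<longleftrightarrow> u \<in> D2"
    and A0: "\<forall>g. proper3 V E g \<longrightarrow> monoc g D1 \<or> monoc g D2"
    and B: "\<exists>g. proper3 V E g \<and> \<not> monoc g D1"
    and C0: "\<forall>e\<in>E - cyc_edges C. \<exists>g. col V g \<and> pex E e g \<and> \<not> monoc g D1 \<and> \<not> monoc g D2"
    unfolding Inv1_def by (auto simp: dist4_def cyc_verts_def diag_def)
  have "v1 \<in> D2" using dgQ dg by auto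
  then have D2e: "D2 = {v1,v3}" using D2 dq by auto
  have mD2: "\<And>g. monoc g D2 \<longleftrightarrow> g v1 = g v3" unfolding D2e monoc_def by auto
  have v: "v1 \<in> V" "v3 \<in> V" "v1 \<noteq> v3" using cvQ dq by auto
  have D: "D1 \<subseteq> V" using diag_sub[OF D1] cvC by auto
  have A: "\<forall>g. proper3 V E g \<longrightarrow> monoc g D1 \<or> g v1 = g v3" using A0 mD2 by blast
  have Cc: "\<forall>e\<in>E - cyc_edges C. \<exists>g. col V g \<and> pex E e g \<and> \<not>monoc g D1 \<and> g v1 \<noteq> g v3"
    using C0 mD2 by blast
  note co = core[OF sub v fr(2,3,4,1) D A B Cc N_def]
  have xyz: "v1 \<notin> {x,y,z}" "v3 \<notin> {x,y,z}" using v fr by auto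
  have finN: "finite N" using N_def by auto
  have dU: "\<And>w. deg (E \<union> N) w = deg E w + deg N w"
    by (rule deg_Un[OF fin(2) finN]) (use disjN[OF sub fr(2-4)] N_def in simp)
  note dN = degN[OF fr(1) v(3) xyz N_def]
  have dEo: "deg E x = 0" "deg E y = 0" "deg E z = 0" using deg_out[OF sub] fr by auto
  show ?thesis unfolding Inv1_def N_def[symmetric]
  proof (intro conjI ex2I[of _ "D1" "{x,z}"])
    show "finite (V \<union> {x, y, z})" using fin by simp
    show "finite (E \<union> N)" using fin finN by simp
    show "\<forall>e\<in>E \<union> N. e \<subseteq> V \<union> {x, y, z}" using sub v N_def by auto
    show "\<forall>v\<in>V \<union> {x, y, z}. \<exists>e\<in>E \<union> N. v \<in> e" using cov N_def by auto
    show "dist4 C" by fact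
    show "dist4 (v1, x, y, z)" using fr xyz by (auto simp: dist4_def)
    show "cyc_verts C \<subseteq> V \<union> {x, y, z}" using cvC by auto
    show "cyc_verts (v1, x, y, z) \<subseteq> V \<union> {x, y, z}" using v by (auto simp: cyc_verts_def)
    show "cyc_edges C \<subseteq> E \<union> N" using ceC by auto
    show "cyc_edges (v1, x, y, z) \<subseteq> E \<union> N" by (auto simp: cyc_edges_def N_def)
    show "D1 \<in> diag C" by fact
    show "{x, z} \<in> diag (v1, x, y, z)" by (simp add: diag_def)
    show "{x, z} \<inter> cyc_verts C = {}" using cvC fr by auto
    show "\<forall>u\<in>cyc_verts C. (deg (E \<union> N) u = 2) = (u \<in> D1)"
    proof
      fix u assume u: "u \<in> cyc_verts C"
      then have "u \<notin> {v1,v3,x,y,z}" using D2C D2e cvC fr by auto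
      then have "deg N u = 0" by (rule dN(6))
      then show "(deg (E \<union> N) u = 2) = (u \<in> D1)" using dU dgC u by simp
    qed
    show "\<forall>u\<in>cyc_verts (v1, x, y, z). (deg (E \<union> N) u = 2) = (u \<in> {x, z})"
      using dU dg dN(1,3,4,5) dEo v fr xyz by (auto simp: cyc_verts_def)
  qed (use co in auto)
qed

lemma inv_all: "classC V E C Q \<Longrightarrow> Inv0 V E C Q \<or> Inv1 V E C Q"
proof (induction rule: classC.induct)
  case (base a b c d)
  then show ?case by (simp add: Inv0_def dist4_def cyc_verts_def cyc_edges_def)
next
  case (rot V E C v1 v2 v3 v4)
  then show ?case using Inv0_rot[of V E C v1 v2 v3 v4] Inv1_rot[of V E C v1 v2 v3 v4] by blast
next
  case (rev V E C v1 v2 v3 v4)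
  then show ?case using Inv0_rev[of V E C v1 v2 v3 v4] Inv1_rev[of V E C v1 v2 v3 v4] by blast
next
  case (step V E C v1 v2 v3 v4 x y z)
  then show ?case using step0[of V E C v1 v2 v3 v4 x y z] step1[of V E C v1 v2 v3 v4 x y z] by blast
qed

theorem mainTheorem7:
  fixes V :: "'a set" and E :: "'a set set" and C1 C2 :: "'a \<times> 'a \<times> 'a \<times> 'a"
  assumes "classC V E C1 C2"
    and "card V \<noteq> 4"
  shows "critical V E (cyc_verts C1 \<union> cyc_verts C2) (cyc_edges C1 \<union> cyc_edges C2)
    \<and> (\<forall>f. proper3 (cyc_verts C1 \<union> cyc_verts C2) (cyc_edges C1 \<union> cyc_edges C2) f
          \<and> (\<forall>Ci\<in>{C1, C2}. \<forall>u\<in>cyc_verts Ci. \<forall>v\<in>cyc_verts Ci.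
                u \<noteq> v \<and> deg E u = 2 \<and> deg E v = 2 \<longrightarrow> f u \<noteq> f v)
       \<longrightarrow> \<not> extends_to (cyc_verts C1 \<union> cyc_verts C2) f V E)"
proof -
  have I: "Inv1 V E C1 C2" using inv_all[OF assms(1)] assms(2) unfolding Inv0_def by auto
  then obtain D1 D2 where
    sub: "\<forall>e\<in>E. e \<subseteq> V" and cov: "\<forall>v\<in>V. \<exists>e\<in>E. v \<in> e"
    and d1: "dist4 C1" and d2: "dist4 C2" and cv1: "cyc_verts C1 \<subseteq> V" and cv2: "cyc_verts C2 \<subseteq> V"
    and ce1: "cyc_edges C1 \<subseteq> E" and ce2: "cyc_edges C2 \<subseteq> E"
    and D1: "D1 \<in> diag C1" and D2: "D2 \<in> diag C2"
    and dgC: "\<forall>u\<in>cyc_verts C1. deg E u = 2 \<longleftrightarrow> u \<in> D1"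
    and dgQ: "\<forall>u\<in>cyc_verts C2. deg E u = 2 \<longleftrightarrow> u \<in> D2"
    and A: "\<forall>g. proper3 V E g \<longrightarrow> monoc g D1 \<or> monoc g D2"
    and Cc: "\<forall>e\<in>E - cyc_edges C1. \<exists>g. col V g \<and> pex E e g \<and> \<not> monoc g D1 \<and> \<not> monoc g D2"
    unfolding Inv1_def by blast
  obtain p1 r1 where P1: "D1 = {p1,r1}" "p1 \<noteq> r1" using diag_pair[OF D1 d1] by blast
  obtain p2 r2 where P2: "D2 = {p2,r2}" "p2 \<noteq> r2" using diag_pair[OF D2 d2] by blast
  have s1: "p1 \<in> cyc_verts C1" "r1 \<in> cyc_verts C1" using diag_sub[OF D1] P1 by auto
  have s2: "p2 \<in> cyc_verts C2" "r2 \<in> cyc_verts C2" using diag_sub[OF D2] P2 by auto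
  define VS where "VS = cyc_verts C1 \<union> cyc_verts C2"
  define ES where "ES = cyc_edges C1 \<union> cyc_edges C2"
  have nonext: "\<not> extends_to VS f V E"
    if H: "\<forall>Ci\<in>{C1, C2}. \<forall>u\<in>cyc_verts Ci. \<forall>v\<in>cyc_verts Ci.
                u \<noteq> v \<and> deg E u = 2 \<and> deg E v = 2 \<longrightarrow> f u \<noteq> f v" for f
  proof
    assume "extends_to VS f V E"
    then obtain g where g: "proper3 V E g" "\<forall>v\<in>VS. g v = f v" unfolding extends_to_def by blast
    have h1: "f p1 \<noteq> f r1" using H s1 dgC P1 by auto
    have h2: "f p2 \<noteq> f r2" using H s2 dgQ P2 by auto
    have "g p1 = f p1" "g r1 = f r1" "g p2 = f p2" "g r2 = f r2" using g(2) s1 s2 VS_def by auto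
    moreover have "monoc g D1 \<or> monoc g D2" using A g(1) by blast
    ultimately show False using h1 h2 unfolding P1 P2 monoc_def by auto
  qed
  have hyp: "\<forall>Ci\<in>{C1, C2}. \<forall>u\<in>cyc_verts Ci. \<forall>v\<in>cyc_verts Ci.
                u \<noteq> v \<and> deg E u = 2 \<and> deg E v = 2 \<longrightarrow> g u \<noteq> g v"
    if "\<not> monoc g D1" "\<not> monoc g D2" for g
  proof -
    have "g p1 \<noteq> g r1" "g p2 \<noteq> g r2" using that P1 P2 unfolding monoc_def by auto
    note gg = this
    show ?thesis
    proof (intro ballI impI)
      fix Ci u v assume ci: "Ci \<in> {C1,C2}" and uv: "u \<in> cyc_verts Ci" "v \<in> cyc_verts Ci"
        and c: "u \<noteq> v \<and> deg E u = 2 \<and> deg E v = 2"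
      from ci consider "Ci = C1" | "Ci = C2" by blast
      then show "g u \<noteq> g v"
      proof cases
        case 1
        then have "u \<in> {p1,r1}" "v \<in> {p1,r1}" using dgC uv c P1 by auto
        then show ?thesis using c gg by auto
      next
        case 2
        then have "u \<in> {p2,r2}" "v \<in> {p2,r2}" using dgQ uv c P2 by auto
        then show ?thesis using c gg by auto
      qed
    qed
  qed
  have crit: "critical V E VS ES"
    unfolding critical_def
  proof (intro conjI allI impI)
    show "is_subgraph VS ES V E" unfolding is_subgraph_def VS_def ES_def
      using cv1 cv2 ce1 ce2 ce_sub by blast
    fix V'' E'' assume a: "is_subgraph V'' E'' V E \<and> VS \<subseteq> V'' \<and> ES \<subseteq> E'' \<and> (V'', E'') \<noteq> (V, E)"
    have "\<exists>e\<in>E. e \<notin> E''"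
    proof (rule ccontr)
      assume "\<not> (\<exists>e\<in>E. e \<notin> E'')"
      then have EE: "E \<subseteq> E''" by blast
      have "E'' \<subseteq> E" "V'' \<subseteq> V" "\<forall>e\<in>E''. e \<subseteq> V''" using a unfolding is_subgraph_def by auto
      then have "V'' \<noteq> V" using a EE by auto
      then obtain v where "v \<in> V" "v \<notin> V''" using \<open>V'' \<subseteq> V\<close> by blast
      then obtain e where "e \<in> E" "v \<in> e" using cov by blast
      then show False using EE \<open>\<forall>e\<in>E''. e \<subseteq> V''\<close> \<open>v \<notin> V''\<close> by blast
    qed
    then obtain e where e: "e \<in> E" "e \<notin> E''" by blast
    then have eES: "e \<notin> ES" using a by blast
    then obtain g where g: "col V g" "pex E e g" "\<not> monoc g D1" "\<not> monoc g D2"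
      using Cc e ES_def by blast
    have sE: "E'' \<subseteq> E" "V'' \<subseteq> V" using a unfolding is_subgraph_def by auto
    show "\<exists>f. proper3 VS ES f \<and> extends_to VS f V'' E'' \<and> \<not> extends_to VS f V E"
    proof (intro exI conjI)
      show "proper3 VS ES g" unfolding proper3_def
        using g(1,2) eES ce1 ce2 cv1 cv2 unfolding col_def pex_def VS_def ES_def by blast
      show "extends_to VS g V'' E''" unfolding extends_to_def proper3_def
        using g(1,2) e sE unfolding col_def pex_def by blast
      show "\<not> extends_to VS g V E" using nonext hyp g(3,4) by blast
    qed
  qed
  show ?thesis using crit nonext unfolding VS_def ES_def by blast
qed

end
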